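(* Let $\Omega\subset\mathbb{R}^2$ have property (i). 1. If $\Omega$ has property $( * )$, then for every point $\omega\in\partial\Omega$ there exists $\omega^\diamond\in\partial\Omega^\diamond$ such that $\omega\in L(\omega^\diamond)$. 2. If $\Omega$ has property $( ** )$, then for every point $\omega^\diamond\in\partial\Omega^\diamond$ there exists $\omega\in\partial\Omega$ such that $\omega\in L(\omega^\diamond)$.
   Context: Points of $\mathbb{R}^2$: $(x,y)$; of $\mathbb{R}^{2*}$: $(p,q)$. Antipolar: $\Omega^\diamond=\{(p,q):px-qy\ge1\ \forall (x,y)\in\Omega\}$. For $\omega^\diamond=(p,q)$, $L(\omega^\diamond)=\{(x,y)\in\mathbb{R}^2: px-qy=1\}$. Property (i): $\Omega$ nonempty, convex, closed, $0\notin\Omega$, $\lambda\Omega\subset\Omega$ for all $\lambda>1$. $( * )$: $\lambda\Omega\cap\partial\Omega=\varnothing$ for all $\lambda>1$. $( ** )$: with $C=\operatorname{cl}(\mathbb{R}_+\Omega)$, $\mathbb{R}_+=[0,\infty)$, and $\partial C=l_0\cup l_1$ its two boundary rays, $\operatorname{dist}(l_0,\Omega)=\operatorname{dist}(l_1,\Omega)=0$. *)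

theory Defs
  imports "HOL-Analysis.Analysis"
begin

definition antipolar :: "(real \<times> real) set \<Rightarrow> (real \<times> real) set" where
  "antipolar \<Omega> = {(p, q). \<forall>(x, y) \<in> \<Omega>. p * x - q * y \<ge> 1}"

definition Lline :: "real \<times> real \<Rightarrow> (real \<times> real) set" where
  "Lline w = {(x, y). fst w * x - snd w * y = 1}"

definition prop_i :: "(real \<times> real) set \<Rightarrow> bool" where
  "prop_i \<Omega> \<longleftrightarrow> \<Omega> \<noteq> {} \<and> convex \<Omega> \<and> closed \<Omega> \<and> (0::real \<times> real) \<notin> \<Omega> \<and>
     (\<forall>l::real. l > 1 \<longrightarrow> (\<lambda>x. l *\<^sub>R x) ` \<Omega> \<subseteq> \<Omega>)"

definition prop_star :: "(real \<times> real) set \<Rightarrow> bool" where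
  "prop_star \<Omega> \<longleftrightarrow> (\<forall>l::real. l > 1 \<longrightarrow> ((\<lambda>x. l *\<^sub>R x) ` \<Omega>) \<inter> frontier \<Omega> = {})"

definition cone_hull0 :: "(real \<times> real) set \<Rightarrow> (real \<times> real) set" where
  "cone_hull0 \<Omega> = closure {t *\<^sub>R w | t w. t \<ge> 0 \<and> w \<in> \<Omega>}"

definition ray0 :: "real \<times> real \<Rightarrow> (real \<times> real) set" where
  "ray0 u = {t *\<^sub>R u | t. t \<ge> 0}"

definition prop_starstar :: "(real \<times> real) set \<Rightarrow> bool" where
  "prop_starstar \<Omega> \<longleftrightarrow> (\<exists>u0 u1. u0 \<noteq> 0 \<and> u1 \<noteq> 0 \<and>
      frontier (cone_hull0 \<Omega>) = ray0 u0 \<union> ray0 u1 \<and>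
      setdist (ray0 u0) \<Omega> = 0 \<and> setdist (ray0 u1) \<Omega> = 0)"

end

theory Submission
  imports Defs
begin


definition ga :: "real \<times> real \<Rightarrow> real \<times> real" where
  "ga w = (fst w, - snd w)"

lemma ga_inner: "ga w \<bullet> z = fst w * fst z - snd w * snd z"
  by (simp add: ga_def inner_prod_def)

lemma ga_norm: "norm (ga w) = norm w"
  by (simp add: ga_def norm_prod_def)

lemma ga_ga: "ga (ga w) = w"
  by (simp add: ga_def)

lemma ga_diff: "ga (x - w) = ga x - ga w"
  by (simp add: ga_def)

lemma ga_scale: "ga (t *\<^sub>R w) = t *\<^sub>R ga w"
  by (simp add: ga_def)

lemma ga_zero_iff: "ga w = 0 \<longleftrightarrow> w = 0"
  by (auto simp: ga_def prod_eq_iff)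

lemma antipolar_iff: "w \<in> antipolar \<Omega> \<longleftrightarrow> (\<forall>z\<in>\<Omega>. 1 \<le> ga w \<bullet> z)"
  by (auto simp: antipolar_def ga_inner case_prod_beta)

lemma Lline_iff: "z \<in> Lline w \<longleftrightarrow> ga w \<bullet> z = 1"
  by (auto simp: Lline_def ga_inner case_prod_beta)

lemma closed_antipolar: "closed (antipolar \<Omega>)"
proof -
  have "antipolar \<Omega> = (\<Inter>z\<in>\<Omega>. {w. 1 \<le> ga w \<bullet> z})"
    by (auto simp: antipolar_iff)
  moreover have "closed {w. 1 \<le> ga w \<bullet> z}" for z
    unfolding ga_inner by (intro closed_Collect_le continuous_intros)
  ultimately show ?thesis by auto
qed

lemma supp:
  fixes S :: "(real \<times> real) set"
  assumes "convex S" "x \<in> S" "x \<notin> interior S"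
  obtains a where "a \<noteq> 0" "\<And>y. y \<in> S \<Longrightarrow> a \<bullet> x \<le> a \<bullet> y"
proof (cases "interior S = {}")
  case True
  obtain a b where a0: "a \<noteq> 0" and sub: "S \<subseteq> {x. a \<bullet> x = b}"
    by (rule empty_interior_subset_hyperplane[OF assms(1) True])
  have "a \<bullet> x \<le> a \<bullet> y" if "y \<in> S" for y
  proof -
    have "y \<in> {x. a \<bullet> x = b}" by (rule subsetD[OF sub that])
    moreover have "x \<in> {x. a \<bullet> x = b}" by (rule subsetD[OF sub assms(2)])
    ultimately show ?thesis by simp
  qed
  then show ?thesis using that[of a] \<open>a \<noteq> 0\<close> by blast
next
  case False
  then have "rel_interior S = interior S" by (rule rel_interior_nonempty_interior)
  have xcl: "x \<in> closure S" using assms(2) closure_subset by blast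
  have xri: "x \<notin> rel_interior S" using assms(3) \<open>rel_interior S = interior S\<close> by simp
  obtain a where "a \<noteq> 0" "\<And>y. y \<in> closure S \<Longrightarrow> a \<bullet> x \<le> a \<bullet> y"
     "\<And>y. y \<in> rel_interior S \<Longrightarrow> a \<bullet> x < a \<bullet> y"
    using supporting_hyperplane_relative_frontier[OF assms(1) xcl xri] by metis
  then show ?thesis using that[of a] closure_subset by blast
qed

lemma not_frontier_lemma:
  fixes S :: "(real \<times> real) set"
  assumes "a \<noteq> 0" "\<And>y. y \<in> S \<Longrightarrow> c \<le> a \<bullet> y" "x \<in> S" "a \<bullet> x = c"
  shows "x \<in> frontier S"
  unfolding frontier_straddle
proof (intro allI impI conjI)
  fix e :: real assume e: "e > 0"
  show "\<exists>y\<in>S. dist x y < e" using assms(3) e by (intro bexI[of _ x]) auto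
  define s where "s = e / (2 * norm a)"
  have na: "norm a > 0" using assms(1) by simp
  have s: "s > 0" using e na by (simp add: s_def)
  have "a \<bullet> (x - s *\<^sub>R a) = c - s * (a \<bullet> a)" using assms(4) by (simp add: inner_diff_right)
  moreover have "a \<bullet> a > 0" using assms(1) by simp
  ultimately have "a \<bullet> (x - s *\<^sub>R a) < c" using s by simp
  then have nS: "x - s *\<^sub>R a \<notin> S" using assms(2)[of "x - s *\<^sub>R a"] by linarith
  have "dist x (x - s *\<^sub>R a) = s * norm a" using s by (simp add: dist_norm abs_of_pos)
  moreover have "s * norm a < e" using e na by (simp add: s_def)
  ultimately have d: "dist x (x - s *\<^sub>R a) < e" by linarith
  show "\<exists>y. y \<notin> S \<and> dist x y < e" using nS d by blast
qed

lemma part1: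
  fixes \<Omega> :: "(real \<times> real) set"
  assumes pi: "prop_i \<Omega>" and ps: "prop_star \<Omega>" and wf: "\<omega> \<in> frontier \<Omega>"
  shows "\<exists>\<omega>' \<in> frontier (antipolar \<Omega>). \<omega> \<in> Lline \<omega>'"
proof -
  have conv: "convex \<Omega>" and cl: "closed \<Omega>" and sc: "\<And>l. l > 1 \<Longrightarrow> (\<lambda>x. l *\<^sub>R x) ` \<Omega> \<subseteq> \<Omega>"
    using pi unfolding prop_i_def by auto
  have wS: "\<omega> \<in> \<Omega>" using wf cl by (simp add: frontier_def)
  have wI: "\<omega> \<notin> interior \<Omega>" using wf by (simp add: frontier_def)
  obtain a where a0: "a \<noteq> 0" and sup: "\<And>y. y \<in> \<Omega> \<Longrightarrow> a \<bullet> \<omega> \<le> a \<bullet> y"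
    using supp[OF conv wS wI] by blast
  have w2: "2 *\<^sub>R \<omega> \<in> \<Omega>" using sc[of 2] wS by auto
  have "a \<bullet> \<omega> \<le> a \<bullet> (2 *\<^sub>R \<omega>)" using sup[OF w2] .
  then have c0: "a \<bullet> \<omega> \<ge> 0" by simp
  have "a \<bullet> \<omega> \<noteq> 0"
  proof
    assume h: "a \<bullet> \<omega> = 0"
    have "2 *\<^sub>R \<omega> \<in> frontier \<Omega>"
      by (rule not_frontier_lemma[of a \<Omega> 0]) (use a0 sup h w2 in auto)
    moreover have "2 *\<^sub>R \<omega> \<in> (\<lambda>x. 2 *\<^sub>R x) ` \<Omega>" using wS by blast
    moreover have "(\<lambda>x. 2 *\<^sub>R x) ` \<Omega> \<inter> frontier \<Omega> = {}"
      using ps unfolding prop_star_def by (simp del: image_Int)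
    ultimately show False by blast
  qed
  with c0 have cpos: "a \<bullet> \<omega> > 0" by simp
  define c where "c = a \<bullet> \<omega>"
  define w' where "w' = ga ((1/c) *\<^sub>R a)"
  have gw': "ga w' = (1/c) *\<^sub>R a" by (simp add: w'_def ga_ga)
  have L: "\<omega> \<in> Lline w'" unfolding Lline_iff gw' using cpos by (simp add: c_def)
  have A: "w' \<in> antipolar \<Omega>" unfolding antipolar_iff gw'
  proof
    fix z assume "z \<in> \<Omega>"
    then have "c \<le> a \<bullet> z" using sup c_def by simp
    then show "1 \<le> (1/c) *\<^sub>R a \<bullet> z" using cpos c_def by (simp add: field_simps)
  qed
  have "w' \<in> frontier (antipolar \<Omega>)"
    unfolding frontier_straddle
  proof (intro allI impI conjI)
    fix e :: real assume e: "e > 0"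
    show "\<exists>x\<in>antipolar \<Omega>. dist w' x < e" using A e by (intro bexI[of _ w']) auto
    define s where "s = min (1/2) (e / (2 * (norm w' + 1)))"
    have np: "0 < 2 * (norm w' + 1)" by (smt (verit) norm_ge_zero)
    have "0 < e / (2 * (norm w' + 1))" using e np by (rule divide_pos_pos)
    then have s0: "s > 0" by (simp add: s_def)
    have s1: "s < 1" by (simp add: s_def)
    have "ga ((1 - s) *\<^sub>R w') \<bullet> \<omega> = (1 - s) * (ga w' \<bullet> \<omega>)" by (simp add: ga_scale)
    also have "\<dots> = 1 - s" using L by (simp add: Lline_iff)
    finally have "ga ((1 - s) *\<^sub>R w') \<bullet> \<omega> < 1" using s0 by simp
    then have nA: "(1 - s) *\<^sub>R w' \<notin> antipolar \<Omega>"
      using wS antipolar_iff[of "(1 - s) *\<^sub>R w'" \<Omega>] by auto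
    have "dist w' ((1 - s) *\<^sub>R w') = s * norm w'" using s0
      by (simp add: dist_norm algebra_simps)
    also have "\<dots> \<le> (e / (2 * (norm w' + 1))) * norm w'"
      by (rule mult_right_mono) (auto simp: s_def)
    also have "\<dots> < e"
    proof -
      have "norm w' < 2 * (norm w' + 1)" by (smt (verit) norm_ge_zero)
      then have "e * norm w' < e * (2 * (norm w' + 1))" using e by simp
      then show ?thesis using np by (simp add: pos_divide_less_eq)
    qed
    finally have d: "dist w' ((1 - s) *\<^sub>R w') < e" .
    show "\<exists>x. x \<notin> antipolar \<Omega> \<and> dist w' x < e" using nA d by blast
  qed
  then show ?thesis using L by blast
qed

lemma ray_setdist_pos:
  fixes \<Omega> :: "(real \<times> real) set"
  assumes ne: "\<Omega> \<noteq> {}" and g0: "g \<noteq> 0" and pos: "\<And>z. z \<in> \<Omega> \<Longrightarrow> 1 \<le> g \<bullet> z"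
    and gu: "g \<bullet> u = 0"
  shows "setdist (ray0 u) \<Omega> > 0"
proof -
  have ng: "norm g > 0" using g0 by simp
  have "1 / norm g \<le> setdist (ray0 u) \<Omega>"
    unfolding le_setdist_iff
  proof (intro conjI ballI impI)
    fix x y assume x: "x \<in> ray0 u" and y: "y \<in> \<Omega>"
    obtain t where xt: "x = t *\<^sub>R u" using x unfolding ray0_def by blast
    have gx: "g \<bullet> x = 0" using gu xt by simp
    have "1 \<le> g \<bullet> y - g \<bullet> x" using pos[OF y] gx by simp
    also have "\<dots> = g \<bullet> (y - x)" by (simp add: inner_diff_right)
    also have "\<dots> \<le> norm g * norm (y - x)" by (rule norm_cauchy_schwarz)
    also have "\<dots> = norm g * dist x y" by (simp add: dist_norm norm_minus_commute)
    finally have "1 \<le> norm g * dist x y" .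
    then show "1 / norm g \<le> dist x y" using ng by (simp add: divide_le_eq mult.commute)
  next
    have "0 \<in> ray0 u" unfolding ray0_def by (rule CollectI, rule exI[of _ 0]) simp
    then show "ray0 u = {} \<or> \<Omega> = {} \<Longrightarrow> 1 / norm g \<le> 0" using ne by auto
  qed
  moreover have "1 / norm g > 0" using ng by simp
  ultimately show ?thesis by linarith
qed

lemma part2:
  fixes \<Omega> :: "(real \<times> real) set"
  assumes pi: "prop_i \<Omega>" and pss: "prop_starstar \<Omega>" and wf: "w \<in> frontier (antipolar \<Omega>)"
  shows "\<exists>\<omega> \<in> frontier \<Omega>. \<omega> \<in> Lline w"
proof -
  have ne: "\<Omega> \<noteq> {}" and cl: "closed \<Omega>" and n0: "0 \<notin> \<Omega>"
    using pi unfolding prop_i_def by auto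
  obtain u0 u1 where fr: "frontier (cone_hull0 \<Omega>) = ray0 u0 \<union> ray0 u1"
    and d0: "setdist (ray0 u0) \<Omega> = 0" and d1: "setdist (ray0 u1) \<Omega> = 0"
    using pss unfolding prop_starstar_def by blast
  define g where "g = ga w"
  have wA: "w \<in> antipolar \<Omega>" using wf closed_antipolar[of \<Omega>] by (simp add: frontier_def)
  have pos: "1 \<le> g \<bullet> z" if "z \<in> \<Omega>" for z using wA that unfolding antipolar_iff g_def by blast
  obtain v where v: "v \<in> \<Omega>" using ne by blast
  have g0: "g \<noteq> 0" using pos[OF v] by auto
  define S where "S = {t *\<^sub>R w | t w. t \<ge> 0 \<and> w \<in> \<Omega>}"
  define C where "C = closure S"
  have C_def': "cone_hull0 \<Omega> = C" by (simp add: cone_hull0_def C_def S_def)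
  have SC: "S \<subseteq> C" unfolding C_def by (rule closure_subset)
  have nonneg: "0 \<le> g \<bullet> z" if "z \<in> C" for z
  proof -
    have "S \<subseteq> {z. 0 \<le> g \<bullet> z}"
    proof
      fix z assume "z \<in> S"
      then obtain t y where "z = t *\<^sub>R y" "t \<ge> 0" "y \<in> \<Omega>" unfolding S_def by blast
      moreover have "0 \<le> g \<bullet> y" using pos[of y] \<open>y \<in> \<Omega>\<close> by simp
      ultimately show "z \<in> {z. 0 \<le> g \<bullet> z}" by simp
    qed
    then have "C \<subseteq> {z. 0 \<le> g \<bullet> z}" unfolding C_def
      by (rule closure_minimal) (simp add: closed_halfspace_ge)
    then show ?thesis using that by blast
  qed
  have strict: "0 < g \<bullet> z" if "z \<in> C" "z \<noteq> 0" for z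
  proof (rule ccontr)
    assume "\<not> 0 < g \<bullet> z"
    then have gz: "g \<bullet> z = 0" using nonneg[OF that(1)] by simp
    have "z \<in> frontier C"
      by (rule not_frontier_lemma[of g C 0]) (use g0 nonneg that(1) gz in auto)
    then have "z \<in> ray0 u0 \<union> ray0 u1" using fr C_def' by simp
    then obtain u t where ut: "u = u0 \<or> u = u1" "z = t *\<^sub>R u" unfolding ray0_def by blast
    then have "t \<noteq> 0" using that(2) by auto
    then have "g \<bullet> u = 0" using gz ut(2) by simp
    then have "setdist (ray0 u) \<Omega> > 0" using ray_setdist_pos[OF ne g0 pos] by blast
    then show False using ut(1) d0 d1 by auto
  qed
  define K where "K = C \<inter> sphere 0 1"
  have Kc: "compact K" unfolding K_def C_def by (intro closed_Int_compact) auto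
  have v0: "v \<noteq> 0" using v n0 by auto
  have scl: "(1 / norm z) *\<^sub>R z \<in> K" if "z \<in> \<Omega>" "z \<noteq> 0" for z
  proof -
    have "(1 / norm z) *\<^sub>R z \<in> S" unfolding S_def
      by (rule CollectI, rule exI[of _ "1 / norm z"], rule exI[of _ z]) (use that in simp)
    then show ?thesis unfolding K_def using SC that(2) by auto
  qed
  have Kne: "K \<noteq> {}" using scl[OF v v0] by blast
  have "continuous_on K (\<lambda>z. g \<bullet> z)" by (intro continuous_intros)
  then obtain k where kK: "k \<in> K" and kmin: "\<And>y. y \<in> K \<Longrightarrow> g \<bullet> k \<le> g \<bullet> y"
    using continuous_attains_inf[OF Kc Kne] by blast
  define m where "m = g \<bullet> k"
  have m0: "m > 0" using kK strict unfolding K_def m_def by fastforce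
  have lower: "m * norm z \<le> g \<bullet> z" if "z \<in> \<Omega>" for z
  proof -
    have z0: "z \<noteq> 0" using that n0 by auto
    have "m \<le> g \<bullet> ((1 / norm z) *\<^sub>R z)" using kmin[OF scl[OF that z0]] m_def by simp
    then have "m \<le> (g \<bullet> z) / norm z" by simp
    then show ?thesis using z0 by (simp add: le_divide_eq mult.commute)
  qed
  have "\<exists>\<omega>\<in>\<Omega>. g \<bullet> \<omega> = 1"
  proof (rule ccontr)
    assume "\<not> ?thesis"
    then have gt: "1 < g \<bullet> z" if "z \<in> \<Omega>" for z using pos[OF that] that by force
    define R where "R = 2 / m"
    have R0: "R > 0" using m0 by (simp add: R_def)
    obtain \<mu> where mu1: "\<mu> > 1" and mu: "\<And>z. z \<in> \<Omega> \<inter> cball 0 R \<Longrightarrow> \<mu> \<le> g \<bullet> z"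
    proof (cases "\<Omega> \<inter> cball 0 R = {}")
      case True
      then show ?thesis using that[of 2] by auto
    next
      case False
      have "compact (\<Omega> \<inter> cball 0 R)" using cl by (intro closed_Int_compact) auto
      moreover have "continuous_on (\<Omega> \<inter> cball 0 R) (\<lambda>z. g \<bullet> z)" by (intro continuous_intros)
      ultimately obtain z0 where z0: "z0 \<in> \<Omega> \<inter> cball 0 R"
        and zmin: "\<And>y. y \<in> \<Omega> \<inter> cball 0 R \<Longrightarrow> g \<bullet> z0 \<le> g \<bullet> y"
        using continuous_attains_inf[OF _ False] by blast
      show ?thesis using that[of "g \<bullet> z0"] gt z0 zmin by blast
    qed
    define e where "e = min (m / 2) ((\<mu> - 1) / R)"
    have e0: "e > 0" using m0 mu1 R0 by (simp add: e_def)
    obtain x where xA: "x \<notin> antipolar \<Omega>" and dx: "dist w x < e"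
      using wf e0 unfolding frontier_straddle by blast
    obtain z where z: "z \<in> \<Omega>" and gxz: "ga x \<bullet> z < 1"
      using xA unfolding antipolar_iff by force
    have "ga x \<bullet> z = g \<bullet> z + (ga x - g) \<bullet> z" by (simp add: inner_diff_left)
    moreover have "\<bar>(ga x - g) \<bullet> z\<bar> \<le> norm (ga x - g) * norm z" by (rule Cauchy_Schwarz_ineq2)
    moreover have "norm (ga x - g) = dist w x"
      by (simp add: g_def ga_diff[symmetric] ga_norm dist_norm norm_minus_commute)
    ultimately have ab: "\<bar>(ga x - g) \<bullet> z\<bar> \<le> dist w x * norm z" by simp
    have "- ((ga x - g) \<bullet> z) \<le> \<bar>(ga x - g) \<bullet> z\<bar>" by (rule abs_ge_minus_self)
    with ab \<open>ga x \<bullet> z = g \<bullet> z + (ga x - g) \<bullet> z\<close>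
    have "ga x \<bullet> z \<ge> g \<bullet> z - dist w x * norm z" by linarith
    moreover have "dist w x * norm z \<le> e * norm z" using dx by (simp add: mult_right_mono)
    ultimately have key: "ga x \<bullet> z \<ge> g \<bullet> z - e * norm z" by linarith
    show False
    proof (cases "norm z \<le> R")
      case True
      then have "\<mu> \<le> g \<bullet> z" using mu z by simp
      moreover have "e * norm z \<le> ((\<mu> - 1) / R) * R"
        using True e0 R0 by (intro mult_mono) (auto simp: e_def)
      moreover have "((\<mu> - 1) / R) * R = \<mu> - 1" using R0 by simp
      ultimately show False using key gxz by linarith
    next
      case False
      have "e \<le> m / 2" unfolding e_def by (rule min.cobounded1)
      then have "e * norm z \<le> (m / 2) * norm z" by (intro mult_right_mono) auto
      moreover have "m * norm z \<le> g \<bullet> z" using lower[OF z] .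
      moreover have "(m / 2) * R < (m / 2) * norm z" using False m0 by simp
      moreover have "(m / 2) * R = 1" using m0 by (simp add: R_def)
      ultimately show False using key gxz by linarith
    qed
  qed
  then obtain \<omega> where wO: "\<omega> \<in> \<Omega>" and g1: "g \<bullet> \<omega> = 1" by blast
  have "\<omega> \<in> frontier \<Omega>" by (rule not_frontier_lemma[of g \<Omega> 1]) (use g0 pos wO g1 in auto)
  moreover have "\<omega> \<in> Lline w" using g1 by (simp add: Lline_iff g_def)
  ultimately show ?thesis by blast
qed


theorem proposition1:
  fixes \<Omega> :: "(real \<times> real) set"
  assumes "prop_i \<Omega>"
  shows "(prop_star \<Omega> \<longrightarrow>
           (\<forall>\<omega> \<in> frontier \<Omega>. \<exists>\<omega>' \<in> frontier (antipolar \<Omega>). \<omega> \<in> Lline \<omega>'))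
       \<and> (prop_starstar \<Omega> \<longrightarrow>
           (\<forall>\<omega>' \<in> frontier (antipolar \<Omega>). \<exists>\<omega> \<in> frontier \<Omega>. \<omega> \<in> Lline \<omega>'))"
  using part1[OF assms] part2[OF assms] by blast

end
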